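(* In the setting described in the context, let $\{q,q'\}\in F$ be an edge of $K$ with source $S(q,q')=(u,v)$, where $\{u,v\}\in E_i$ has weight $w$. Then \[ d_Z(q,u)+w+d_Z(v,q')\le (1+\varepsilon/2)\,w, \] i.e., the tour in the spanner (with Steiner points) consisting of a $Z$-path from $q$ to $u$, the edge $\{u,v\}$, and a $Z$-path from $v$ to $q'$ has length at most $(1+\varepsilon/2)w$.
   Context: Let $G=(V,E)$ be a connected undirected graph on $n$ vertices with positive integer edge weights $w$ and a unique minimum spanning tree $Z$. Fix an integer $k\ge 2$, $\varepsilon>0$, $t=(2k-1)(1+\varepsilon)$, and let $H$ be the greedy spanner: starting from $H=(V,\emptyset)$, the edges of $E$ are processed in non-decreasing order of weight and $\{u,v\}$ is added to $H$ iff currently $d_H(u,v)>t\cdot w(u,v)$. Order the vertices $v_1,\dots,v_n$ by a preorder traversal of $Z$ and let $L=\sum_{j=2}^n d_Z(v_{j-1},v_j)$. Fix $i\in\{1,\dots,\lceil\log_k n\rceil\}$, set $a=k^{i-1}L/n$, and let $E_i=\{e\in E(H)\setminus E(Z): a<w(e)\le ka\}$. View $Z$ as a metric tree (each edge of weight $x$ is a segment of length $x$) and let $d_Z$ denote distance in it. Let $P=(p_0,\dots,p_L)$ be a path with unit-length edges, where $v_1=p_0$ and $v_j=p_{\ell_j}$ with $\ell_1=0$, $\ell_j=\ell_{j-1}+d_Z(v_{j-1},v_j)$; each point $p_h$ with $\ell_{j-1}\le h\le \ell_j$ is identified with the point of $Z$ on the $Z$-path from $v_{j-1}$ to $v_j$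 at distance $h-\ell_{j-1}$ from $v_{j-1}$ (these added points are Steiner points subdividing edges of $Z\subseteq H$; $\hat H$ denotes $H$ with these subdivisions). Set $s=8L/(\varepsilon a)$, assumed (by scaling) to be such that $s$ and $L/s=\varepsilon a/8$ are integers. For $j\in[s]$ the interval $I_j$ is $\{p_{(j-1)L/s},\dots,p_{jL/s}\}$, and $r_j$ is an arbitrarily chosen interior point of $I_j$; $R=\{r_1,\dots,r_s\}$. For an integer $b\ge 0$, $N_b(j)=\{r_h: h\in[s], |j-h|\le b\}$. The graph $K=(R,F)$ is defined as follows: for each $e=\{u,v\}\in E_i$ with $u\in I_h$, $v\in I_j$, let $b=\lfloor w(e)/a\rfloor$ and let $M$ be an arbitrary maximal matching between $N_b(h)$ and $N_b(j)$; all edges of $M$ are added to $F$, and for each $\{q,q'\}\in M$ with $q\in N_b(h)$, $q'\in N_b(j)$, the edge $\{u,v\}$ is called its source, written $S(q,q')=(u,v)$. *)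

theory Defs
  imports Complex_Main
begin

definition walk :: "'v set set \<Rightarrow> 'v list \<Rightarrow> bool" where
  "walk F xs \<longleftrightarrow> xs \<noteq> [] \<and> (\<forall>i. Suc i < length xs \<longrightarrow> {xs ! i, xs ! Suc i} \<in> F)"

definition wlen :: "('v set \<Rightarrow> nat) \<Rightarrow> 'v list \<Rightarrow> nat" where
  "wlen w xs = (\<Sum>i<length xs - 1. w {xs ! i, xs ! Suc i})"

definition walk_betw :: "'v set set \<Rightarrow> 'v \<Rightarrow> 'v list \<Rightarrow> 'v \<Rightarrow> bool" where
  "walk_betw F x xs y \<longleftrightarrow> walk F xs \<and> hd xs = x \<and> last xs = y"

definition connected_on :: "'v set \<Rightarrow> 'v set set \<Rightarrow> bool" where
  "connected_on V F \<longleftrightarrow> (\<forall>x\<in>V. \<forall>y\<in>V. \<exists>xs. walk_betw F x xs y)"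

text \<open>Shortest-path distance (used only in connected graphs, where it is attained).\<close>
definition gdist :: "'v set set \<Rightarrow> ('v set \<Rightarrow> nat) \<Rightarrow> 'v \<Rightarrow> 'v \<Rightarrow> nat" where
  "gdist F w x y = (LEAST d. \<exists>xs. walk_betw F x xs y \<and> wlen w xs = d)"

definition acyclic_edges :: "'v set set \<Rightarrow> bool" where
  "acyclic_edges F \<longleftrightarrow> (\<forall>e\<in>F. \<forall>x y. e = {x, y} \<longrightarrow> \<not> (\<exists>xs. walk_betw (F - {e}) x xs y))"

definition spanning_tree :: "'v set \<Rightarrow> 'v set set \<Rightarrow> 'v set set \<Rightarrow> bool" where
  "spanning_tree V E T \<longleftrightarrow> T \<subseteq> E \<and> connected_on V T \<and> acyclic_edges T"

definition unique_mst :: "'v set \<Rightarrow> 'v set set \<Rightarrow> ('v set \<Rightarrow> nat) \<Rightarrow> 'v set set \<Rightarrow> bool" where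
  "unique_mst V E w Z \<longleftrightarrow> spanning_tree V E Z \<and>
     (\<forall>T. spanning_tree V E T \<and> T \<noteq> Z \<longrightarrow> sum w Z < sum w T)"

definition graph :: "'v set \<Rightarrow> 'v set set \<Rightarrow> bool" where
  "graph V E \<longleftrightarrow> finite V \<and> (\<forall>e\<in>E. e \<subseteq> V \<and> card e = 2)"

definition greedy_step :: "real \<Rightarrow> ('v set \<Rightarrow> nat) \<Rightarrow> 'v set set \<Rightarrow> 'v set \<Rightarrow> 'v set set" where
  "greedy_step t w H e =
     (if (\<forall>xs. walk H xs \<and> {hd xs, last xs} = e \<longrightarrow> t * real (w e) < real (wlen w xs))
      then insert e H else H)"

text \<open>Process the edges in the order of the list es (which must be sorted by weight).\<close>
definition greedy_spanner :: "real \<Rightarrow> ('v set \<Rightarrow> nat) \<Rightarrow> 'v set list \<Rightarrow> 'v set set" where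
  "greedy_spanner t w es = foldl (greedy_step t w) {} es"

text \<open>vs is a preorder (DFS) traversal of the tree Z rooted at vs!0: for j>0, the
parent of vs!j lies on the tree path from the root to vs!(j-1).\<close>
definition preorder_traversal :: "'v set \<Rightarrow> 'v set set \<Rightarrow> ('v set \<Rightarrow> nat) \<Rightarrow> 'v list \<Rightarrow> bool" where
  "preorder_traversal V Z w vs \<longleftrightarrow> distinct vs \<and> set vs = V \<and>
     (\<forall>j. 0 < j \<and> j < length vs \<longrightarrow>
        (\<exists>p. {p, vs ! j} \<in> Z \<and>
             gdist Z w (vs ! 0) p + w {p, vs ! j} = gdist Z w (vs ! 0) (vs ! j) \<and>
             gdist Z w (vs ! 0) p + gdist Z w p (vs ! (j - 1)) = gdist Z w (vs ! 0) (vs ! (j - 1))))"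

text \<open>A point (x, y, t) of the metric tree: either a vertex (x = y, t = 0) or the
point on the tree edge {x,y} at distance t from x.  Several triples may denote the
same point; this is harmless since we only use the distance below.\<close>
type_synonym 'v tpt = "'v \<times> 'v \<times> real"

definition vtx :: "'v \<Rightarrow> 'v tpt" where "vtx x = (x, x, 0)"

definition valid_tpt :: "'v set \<Rightarrow> 'v set set \<Rightarrow> ('v set \<Rightarrow> nat) \<Rightarrow> 'v tpt \<Rightarrow> bool" where
  "valid_tpt V Z w p = (case p of (x, y, t) \<Rightarrow>
      (x = y \<and> x \<in> V \<and> t = 0) \<or> (x \<noteq> y \<and> {x, y} \<in> Z \<and> 0 \<le> t \<and> t \<le> real (w {x, y})))"

definition toff :: "('v set \<Rightarrow> nat) \<Rightarrow> 'v tpt \<Rightarrow> 'v \<Rightarrow> real" where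
  "toff w p a = (case p of (x, y, t) \<Rightarrow>
      if a = x then t else if x = y then 0 else real (w {x, y}) - t)"

definition tends :: "'v tpt \<Rightarrow> 'v set" where
  "tends p = (case p of (x, y, t) \<Rightarrow> {x, y})"

text \<open>Distance in the metric tree: either both points lie on the same edge, or a
shortest path leaves through an endpoint of each edge.\<close>
definition tdist :: "'v set set \<Rightarrow> ('v set \<Rightarrow> nat) \<Rightarrow> 'v tpt \<Rightarrow> 'v tpt \<Rightarrow> real" where
  "tdist Z w p p' = Min
     ({toff w p a + real (gdist Z w a b) + toff w p' b | a b. a \<in> tends p \<and> b \<in> tends p'} \<union>
      (case p of (x, y, t) \<Rightarrow> case p' of (x', y', t') \<Rightarrow>
         if x \<noteq> y \<and> x' = x \<and> y' = y then {\<bar>t - t'\<bar>}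
         else if x \<noteq> y \<and> x' = y \<and> y' = x then {\<bar>t - (real (w {x, y}) - t')\<bar>}
         else {}))"

end

theory Submission
  imports Defs
begin

lemma walk_single[simp]: "walk F [x]" by (simp add: walk_def)
lemma walk_Nil[simp]: "\<not> walk F []" by (simp add: walk_def)
lemma walk_Cons2[simp]: "walk F (x#y#xs) \<longleftrightarrow> {x,y} \<in> F \<and> walk F (y#xs)"
proof
  assume h: "walk F (x#y#xs)"
  have "{x,y} \<in> F" using h unfolding walk_def by (metis Suc_less_eq length_Cons nth_Cons_0 nth_Cons_Suc zero_less_Suc)
  moreover have "walk F (y#xs)" unfolding walk_def
  proof (intro conjI allI impI)
    fix i assume "Suc i < length (y#xs)"
    then show "{(y # xs) ! i, (y # xs) ! Suc i} \<in> F" using h unfolding walk_def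
      by (metis Suc_less_eq length_Cons nth_Cons_Suc)
  qed simp
  ultimately show "{x,y} \<in> F \<and> walk F (y#xs)" by simp
next
  assume h: "{x,y} \<in> F \<and> walk F (y#xs)"
  show "walk F (x#y#xs)" unfolding walk_def
  proof (intro conjI allI impI)
    fix i assume i: "Suc i < length (x#y#xs)"
    show "{(x#y#xs) ! i, (x#y#xs) ! Suc i} \<in> F"
    proof (cases i)
      case 0 then show ?thesis using h by simp
    next
      case (Suc j) then show ?thesis using h i unfolding walk_def by auto
    qed
  qed simp
qed

lemma wlen_Nil[simp]: "wlen w [] = 0" by (simp add: wlen_def)
lemma wlen_single[simp]: "wlen w [x] = 0" by (simp add: wlen_def)
lemma wlen_Cons2[simp]: "wlen w (x#y#xs) = w {x,y} + wlen w (y#xs)"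
  unfolding wlen_def by (simp del: sum.lessThan_Suc add: sum.lessThan_Suc_shift)

lemma walk_append_Cons: "walk F (xs @ y # ys) \<longleftrightarrow> walk F (xs @ [y]) \<and> walk F (y # ys)"
proof (induction xs)
  case Nil then show ?case by simp
next
  case (Cons x xs) then show ?case by (cases xs) auto
qed

lemma wlen_append_Cons: "wlen w (xs @ y # ys) = wlen w (xs @ [y]) + wlen w (y # ys)"
proof (induction xs)
  case Nil then show ?case by simp
next
  case (Cons x xs) then show ?case by (cases xs) auto
qed

lemma walk_rev_wlen: "walk F (rev xs) = walk F xs \<and> wlen w (rev xs) = wlen w xs"
proof (induction xs rule: induct_list012)
  case (3 x y zs)
  have e: "rev (x#y#zs) = rev zs @ y # [x]" by simp
  have e2: "rev zs @ [y] = rev (y#zs)" by simp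
  show ?case unfolding e walk_append_Cons wlen_append_Cons e2 using 3(2)
    by (auto simp: insert_commute)
qed auto

lemma walk_rev[simp]: "walk F (rev xs) = walk F xs" using walk_rev_wlen by blast
lemma wlen_rev[simp]: "wlen w (rev xs) = wlen w xs" using walk_rev_wlen by blast

lemma walk_betw_rev: assumes "walk_betw F x xs y" shows "walk_betw F y (rev xs) x"
proof -
  have ne: "xs \<noteq> []" using assms unfolding walk_betw_def walk_def by simp
  show ?thesis using assms ne unfolding walk_betw_def by (simp add: hd_rev last_rev)
qed

lemma walk_join:
  assumes a1: "walk_betw F x xs y" and a2: "walk_betw F y ys z"
  shows "walk_betw F x (xs @ tl ys) z \<and> wlen w (xs @ tl ys) = wlen w xs + wlen w ys"
proof -
  have xne: "xs \<noteq> []" using a1 unfolding walk_betw_def walk_def by blast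
  have yne: "ys \<noteq> []" using a2 unfolding walk_betw_def walk_def by blast
  define xs' where "xs' = butlast xs"
  define ys' where "ys' = tl ys"
  have ly: "last xs = y" using a1 unfolding walk_betw_def by blast
  have hy: "hd ys = y" using a2 unfolding walk_betw_def by blast
  have xs: "xs = xs' @ [y]" using append_butlast_last_id[OF xne, symmetric] unfolding xs'_def ly .
  have ys: "ys = y # ys'" using list.collapse[OF yne] unfolding ys'_def hy by simp
  have e: "xs @ tl ys = xs' @ y # ys'" using xs ys by simp
  have wx: "walk F (xs' @ [y])" using a1 unfolding walk_betw_def xs[symmetric] by blast
  have wy: "walk F (y # ys')" using a2 unfolding walk_betw_def ys[symmetric] by blast
  have W: "walk F (xs' @ y # ys')" using wx wy walk_append_Cons[of F xs' y ys'] by blast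
  have Len: "wlen w (xs' @ y # ys') = wlen w xs + wlen w ys"
    using wlen_append_Cons[of w xs' y ys'] xs ys by simp
  have Hd: "hd (xs' @ y # ys') = x"
  proof (cases xs')
    case Nil
    have "hd xs = x" using a1 unfolding walk_betw_def by blast
    then show ?thesis using xs Nil by simp
  next
    case (Cons c cs)
    have "hd xs = x" using a1 unfolding walk_betw_def by blast
    then show ?thesis using xs Cons by simp
  qed
  have Lt: "last (xs' @ y # ys') = z"
  proof (cases ys')
    case Nil
    have "last ys = z" using a2 unfolding walk_betw_def by blast
    then show ?thesis using ys Nil by simp
  next
    case (Cons c cs)
    have "last ys = z" using a2 unfolding walk_betw_def by blast
    then show ?thesis using ys Cons by simp
  qed
  show ?thesis unfolding e walk_betw_def using W Len Hd Lt by blast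
qed

lemma gdist_le: "walk_betw F x xs y \<Longrightarrow> gdist F w x y \<le> wlen w xs"
  unfolding gdist_def by (rule Least_le) auto

lemma gdist_ex: "walk_betw F x xs y \<Longrightarrow> \<exists>ys. walk_betw F x ys y \<and> wlen w ys = gdist F w x y"
  unfolding gdist_def by (rule LeastI_ex) auto

lemma gdist_sym: "gdist F w x y = gdist F w y x"
proof -
  have "(\<exists>xs. walk_betw F x xs y \<and> wlen w xs = d) \<longleftrightarrow> (\<exists>xs. walk_betw F y xs x \<and> wlen w xs = d)" for d
  proof
    assume "\<exists>xs. walk_betw F x xs y \<and> wlen w xs = d"
    then obtain xs where "walk_betw F x xs y" "wlen w xs = d" by blast
    then have "walk_betw F y (rev xs) x" "wlen w (rev xs) = d" using walk_betw_rev by auto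
    then show "\<exists>xs. walk_betw F y xs x \<and> wlen w xs = d" by blast
  next
    assume "\<exists>xs. walk_betw F y xs x \<and> wlen w xs = d"
    then obtain xs where "walk_betw F y xs x" "wlen w xs = d" by blast
    then have "walk_betw F x (rev xs) y" "wlen w (rev xs) = d" using walk_betw_rev by auto
    then show "\<exists>xs. walk_betw F x xs y \<and> wlen w xs = d" by blast
  qed
  then show ?thesis unfolding gdist_def by simp
qed

lemma walk_take: assumes "walk F xs" "0 < n" shows "walk F (take n xs)"
  unfolding walk_def
proof (intro conjI allI impI)
  show "take n xs \<noteq> []" using assms unfolding walk_def by simp
  fix i assume i: "Suc i < length (take n xs)"
  then have "Suc i < length xs" "Suc i < n" by simp_all
  then show "{take n xs ! i, take n xs ! Suc i} \<in> F" using assms(1) unfolding walk_def by simp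
qed
lemma walk_drop: assumes "walk F xs" "n < length xs" shows "walk F (drop n xs)"
  unfolding walk_def
proof (intro conjI allI impI)
  show "drop n xs \<noteq> []" using assms by simp
  fix i assume i: "Suc i < length (drop n xs)"
  then have "Suc (n + i) < length xs" by simp
  then have "{xs ! (n+i), xs ! Suc (n+i)} \<in> F" using assms(1) unfolding walk_def by blast
  then show "{drop n xs ! i, drop n xs ! Suc i} \<in> F" using assms(2) i by simp
qed


lemma wlen_pos_gen:
  assumes "walk F xs" "2 \<le> length xs" "\<forall>e\<in>F. 0 < w e"
  shows "0 < wlen w xs"
proof -
  obtain a r0 where xa: "xs = a # r0" using assms(2) by (cases xs) auto
  obtain b r where "r0 = b # r" using assms(2) xa by (cases r0) auto
  then have xs: "xs = a # b # r" using xa by simp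
  have "{a,b} \<in> F" using assms(1) xs by simp
  then have "0 < w {a,b}" using assms(3) by blast
  then show ?thesis using xs by simp
qed

lemma pl_split:
  assumes "i \<le> j" "j < length W"
  shows "wlen w (take (Suc j) W) = wlen w (take (Suc i) W) + wlen w (drop i (take (Suc j) W))"
proof -
  define T where "T = take (Suc j) W"
  have iT: "i < length T" using assms unfolding T_def by simp
  have T: "T = take i T @ T ! i # drop (Suc i) T" using id_take_nth_drop[OF iT] .
  have e1: "wlen w T = wlen w (take i T @ T ! i # drop (Suc i) T)" using T by (rule arg_cong)
  have "wlen w T = wlen w (take i T @ [T!i]) + wlen w (T ! i # drop (Suc i) T)"
    using e1 wlen_append_Cons[of w "take i T" "T!i" "drop (Suc i) T"] by (rule trans)
  moreover have "take i T @ [T!i] = take (Suc i) W"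
    using take_Suc_conv_app_nth[OF iT, symmetric] assms(1) unfolding T_def by (simp add: min_def)
  moreover have "T ! i # drop (Suc i) T = drop i T" using Cons_nth_drop_Suc[OF iT] .
  ultimately show ?thesis unfolding T_def by simp
qed

lemma pl_walk:
  assumes "walk F W" "i \<le> j" "j < length W"
  shows "walk_betw F (W!i) (drop i (take (Suc j) W)) (W!j)"
proof -
  define T where "T = take (Suc j) W"
  have iT: "i < length T" using assms unfolding T_def by simp
  have wT: "walk F T" unfolding T_def by (rule walk_take[OF assms(1)]) simp
  have "walk F (drop i T)" by (rule walk_drop[OF wT iT])
  moreover have "hd (drop i T) = W ! i" using iT assms unfolding T_def by (simp add: hd_drop_conv_nth)
  moreover have "last (drop i T) = W ! j"
  proof -
    have "last (drop i T) = last T" using iT by (simp add: last_drop)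
    also have "\<dots> = T ! (length T - 1)" using iT by (intro last_conv_nth) auto
    also have "\<dots> = W ! j" using assms unfolding T_def by simp
    finally show ?thesis .
  qed
  ultimately show ?thesis unfolding walk_betw_def T_def by blast
qed

lemma pl_g:
  assumes "walk F W" "i \<le> j" "j < length W"
  shows "gdist F w (W!i) (W!j) + wlen w (take (Suc i) W) \<le> wlen w (take (Suc j) W)"
  using gdist_le[OF pl_walk[OF assms]] pl_split[OF assms(2,3)] by simp

lemma pl_strict:
  assumes "walk F W" "i < j" "j < length W" "\<forall>e\<in>F. 0 < w e"
  shows "wlen w (take (Suc i) W) < wlen w (take (Suc j) W)"
proof -
  have wb: "walk_betw F (W!i) (drop i (take (Suc j) W)) (W!j)" using pl_walk[OF assms(1) _ assms(3)] assms(2) by simp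
  have "2 \<le> length (drop i (take (Suc j) W))" using assms(2,3) by simp
  then have "0 < wlen w (drop i (take (Suc j) W))"
    using wlen_pos_gen[OF _ _ assms(4)] wb unfolding walk_betw_def by blast
  then show ?thesis using pl_split[of i j W w] assms(2,3) by simp
qed

lemma walk_avoid:
  assumes "walk F zs" "x \<notin> set zs" "x \<in> e"
  shows "walk (F - {e}) zs"
  unfolding walk_def
proof (intro conjI allI impI)
  show "zs \<noteq> []" using assms(1) unfolding walk_def by blast
  fix i assume i: "Suc i < length zs"
  have "{zs ! i, zs ! Suc i} \<in> F" using assms(1) i unfolding walk_def by blast
  moreover have "zs ! i \<in> set zs" "zs ! Suc i \<in> set zs" using i by simp_all
  then have "x \<notin> {zs ! i, zs ! Suc i}" using assms(2) by blast
  then have "{zs ! i, zs ! Suc i} \<noteq> e" using assms(3) by blast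
  ultimately show "{zs ! i, zs ! Suc i} \<in> F - {e}" by blast
qed

locale wtree =
  fixes V :: "'v set" and F :: "'v set set" and w :: "'v set \<Rightarrow> nat"
  assumes edges: "\<And>e. e \<in> F \<Longrightarrow> e \<subseteq> V \<and> card e = 2"
  and wpos: "\<And>e. e \<in> F \<Longrightarrow> 0 < w e"
  and conn: "connected_on V F"
  and acyc: "acyclic_edges F"
begin

abbreviation g where "g \<equiv> gdist F w"

lemma edge_ne: assumes "{x,y} \<in> F" shows "x \<noteq> y"
proof
  assume "x = y"
  then have "card {x,y} = 1" by simp
  then show False using edges[OF assms] by simp
qed

lemma edge_V: "{x,y} \<in> F \<Longrightarrow> x \<in> V \<and> y \<in> V"
  using edges by blast

lemma g_short: assumes "x \<in> V" "y \<in> V" shows "\<exists>xs. walk_betw F x xs y \<and> wlen w xs = g x y"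
proof -
  obtain xs where "walk_betw F x xs y" using conn assms unfolding connected_on_def by blast
  then show ?thesis using gdist_ex[of F x xs y w] by blast
qed

lemma g_tri: assumes "x\<in>V" "y\<in>V" "z\<in>V" shows "g x z \<le> g x y + g y z"
proof -
  obtain xs where xs: "walk_betw F x xs y" "wlen w xs = g x y" using g_short assms by blast
  obtain ys where ys: "walk_betw F y ys z" "wlen w ys = g y z" using g_short assms by blast
  have j: "walk_betw F x (xs @ tl ys) z \<and> wlen w (xs @ tl ys) = wlen w xs + wlen w ys"
    by (rule walk_join[OF xs(1) ys(1)])
  then have "g x z \<le> wlen w (xs @ tl ys)" using gdist_le[of F x "xs @ tl ys" z w] by blast
  then show ?thesis using j xs ys by simp
qed

lemma g_refl: "g x x = 0"
  using gdist_le[of F x "[x]" x w] by (simp add: walk_betw_def)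

lemma g_edge: assumes "{x,y} \<in> F" shows "g x y \<le> w {x,y}"
proof -
  have "walk_betw F x [x,y] y" using assms by (simp add: walk_betw_def)
  then show ?thesis using gdist_le by fastforce
qed

lemma g_zero: assumes "x\<in>V" "y\<in>V" "g x y = 0" shows "x = y"
proof -
  obtain xs where xs: "walk_betw F x xs y" "wlen w xs = g x y" using g_short assms(1,2) by blast
  then have xs0: "wlen w xs = 0" using assms(3) by simp
  show ?thesis
  proof (cases "2 \<le> length xs")
    case True
    have "walk F xs" using xs unfolding walk_betw_def by blast
    then have "0 < wlen w xs" using wlen_pos_gen[of F xs w] True wpos by blast
    then show ?thesis using xs0 by simp
  next
    case False
    have "xs \<noteq> []" using xs unfolding walk_betw_def walk_def by blast
    then obtain a r where xar: "xs = a # r" by (cases xs) auto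
    have "r = []" using False xar by (cases r) auto
    then have "xs = [a]" using xar by simp
    then have "a = x" "a = y" using xs(1) unfolding walk_betw_def by auto
    then show ?thesis by simp
  qed
qed

lemma shortest_distinct:
  assumes wb: "walk_betw F x xs y" and len: "wlen w xs = g x y"
  shows "distinct xs"
proof (rule ccontr)
  assume nd: "\<not> distinct xs"
  obtain as c bs cs where xs: "xs = as @ [c] @ bs @ [c] @ cs" using not_distinct_decomp[OF nd] by blast
  have xs2: "xs = as @ c # (bs @ c # cs)" using xs by simp
  have wx: "walk F xs" using wb unfolding walk_betw_def by blast
  then have "walk F (as @ [c]) \<and> walk F (c # (bs @ c # cs))"
    using walk_append_Cons[of F as c "bs @ c # cs"] xs2 by simp
  then have w1: "walk F (as @ [c])" and w2: "walk F (c # (bs @ c # cs))" by blast+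
  have w2': "walk F ((c # bs) @ c # cs)" using w2 by simp
  then have w3: "walk F ((c # bs) @ [c])" and w4: "walk F (c # cs)"
    using walk_append_Cons[of F "c # bs" c cs] by simp_all
  have l0: "wlen w xs = wlen w (as @ [c]) + wlen w (c # (bs @ c # cs))"
    using wlen_append_Cons[of w as c "bs @ c # cs"] xs2 by simp
  have "wlen w ((c # bs) @ c # cs) = wlen w ((c # bs) @ [c]) + wlen w (c # cs)"
    by (rule wlen_append_Cons)
  then have "wlen w (c # (bs @ c # cs)) = wlen w ((c # bs) @ [c]) + wlen w (c # cs)" by simp
  then have l1: "wlen w xs = wlen w (as @ [c]) + wlen w ((c # bs) @ [c]) + wlen w (c # cs)"
    using l0 by simp
  have "2 \<le> length ((c # bs) @ [c])" by simp
  then have pos: "0 < wlen w ((c # bs) @ [c])" using wlen_pos_gen[OF w3] wpos by blast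
  define S where "S = as @ c # cs"
  have wS: "walk F S" unfolding S_def using w1 w4 walk_append_Cons[of F as c cs] by blast
  have lS: "wlen w S = wlen w (as @ [c]) + wlen w (c # cs)" unfolding S_def by (rule wlen_append_Cons)
  have hS: "hd S = x" using wb xs unfolding S_def walk_betw_def by (cases as) auto
  have tS: "last S = y" using wb xs unfolding S_def walk_betw_def by (cases cs) auto
  have wbS: "walk_betw F x S y" using wS hS tS unfolding walk_betw_def by blast
  have gl: "g x y \<le> wlen w S" using gdist_le[OF wbS] .
  have "wlen w S < wlen w xs" using l1 lS pos by linarith
  with gl len show False by linarith
qed

lemma unique_walk:
  "walk F xs \<Longrightarrow> walk F ys \<Longrightarrow> distinct xs \<Longrightarrow> distinct ys \<Longrightarrow> hd xs = hd ys \<Longrightarrow> last xs = last ys \<Longrightarrow> xs = ys"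
proof (induction xs arbitrary: ys)
  case Nil then show ?case by simp
next
  case (Cons x xs)
  note IH = Cons.IH
  note wx = Cons.prems(1) and wy = Cons.prems(2) and dx = Cons.prems(3) and dy = Cons.prems(4)
    and hxy = Cons.prems(5) and lxy = Cons.prems(6)
  have ysne: "ys \<noteq> []" using wy unfolding walk_def by blast
  obtain y ys1 where ys: "ys = y # ys1" using ysne by (cases ys) auto
  have yx: "y = x" using hxy ys by simp
  show ?case
  proof (cases xs)
    case Nil
    note xsN = Nil
    show ?thesis
    proof (cases ys1)
      case Nil then show ?thesis using ys yx xsN by simp
    next
      case (Cons b r)
      have "last ys \<in> set ys1" using ys Cons by simp
      moreover have "y \<notin> set ys1" using dy ys by simp
      moreover have "last ys = x" using lxy xsN by simp
      ultimately show ?thesis using yx by simp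
    qed
  next
    case (Cons x' xs')
    note xsC = Cons
    have xnot: "x \<notin> set (x' # xs')" using dx xsC by simp
    have lastx: "last (x # xs) = last (x' # xs')" using xsC by simp
    have ys1ne: "ys1 \<noteq> []"
    proof
      assume "ys1 = []"
      then have "last ys = x" using ys yx by simp
      then have "last (x' # xs') = x" using lastx lxy by simp
      moreover have "last (x' # xs') \<in> set (x' # xs')" using last_in_set[of "x' # xs'"] by simp
      ultimately show False using xnot by simp
    qed
    obtain y' ys2 where ys1: "ys1 = y' # ys2" using ys1ne by (cases ys1) auto
    have wxs: "walk F (x # x' # xs')" using wx xsC by simp
    have wys: "walk F (x # y' # ys2)" using wy unfolding ys ys1 yx .
    show ?thesis
    proof (cases "y' = x'")
      case True
      have "xs = ys1"
      proof (rule IH)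
        show "walk F xs" using wxs xsC by simp
        show "walk F ys1" using wys ys1 by simp
        show "distinct xs" using dx by simp
        show "distinct ys1" using dy ys by simp
        show "hd xs = hd ys1" using xsC ys1 True by simp
        have "last xs = last (x # xs)" using xsC by simp
        also have "\<dots> = last ys" by (rule lxy)
        also have "\<dots> = last ys1" using ys ys1 by simp
        finally show "last xs = last ys1" .
      qed
      then show ?thesis using ys yx by simp
    next
      case False
      define e where "e = {x, x'}"
      have eF: "e \<in> F" using wxs unfolding e_def by simp
      have dys: "distinct (x # y' # ys2)" using dy unfolding ys ys1 yx .
      have xy': "x \<noteq> y'" using dys by simp
      have xn2: "x \<notin> set (y' # ys2)" using dys by simp
      have "{x, y'} \<noteq> e" unfolding e_def using False xy' by (auto simp: doubleton_eq_iff)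
      moreover have "{x, y'} \<in> F" using wys by simp
      moreover have "walk (F - {e}) (y' # ys2)"
      proof (rule walk_avoid[of F _ x])
        show "walk F (y' # ys2)" using wys by simp
        show "x \<notin> set (y' # ys2)" by (rule xn2)
        show "x \<in> e" unfolding e_def by simp
      qed
      ultimately have w1: "walk (F - {e}) (x # y' # ys2)" by simp
      have w2: "walk (F - {e}) (x' # xs')"
      proof (rule walk_avoid[of F _ x])
        show "walk F (x' # xs')" using wxs by simp
        show "x \<notin> set (x' # xs')" by (rule xnot)
        show "x \<in> e" unfolding e_def by simp
      qed
      have lys: "last ys = last (x' # xs')" using lxy lastx by simp
      have b1: "walk_betw (F - {e}) x (x # y' # ys2) (last ys)"
        using w1 unfolding walk_betw_def ys ys1 yx by simp
      have w2r: "walk (F - {e}) (rev (x' # xs'))" by (simp only: walk_rev w2)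
      have hr: "hd (rev (x' # xs')) = last ys" unfolding hd_rev lys ..
      have lr: "last (rev (x' # xs')) = x'" unfolding last_rev by simp
      have b2: "walk_betw (F - {e}) (last ys) (rev (x' # xs')) x'"
        using w2r hr lr unfolding walk_betw_def by blast
      have ex: "\<exists>zs. walk_betw (F - {e}) x zs x'"
        using walk_join[OF b1 b2] by blast
      have ac: "\<forall>x0 y0. e = {x0,y0} \<longrightarrow> \<not> (\<exists>xs. walk_betw (F - {e}) x0 xs y0)"
        using acyc eF unfolding acyclic_edges_def by blast
      have False using ac[rule_format, OF e_def] ex by blast
      then show ?thesis ..
    qed
  qed
qed

lemma walkpos:
  assumes AV: "A\<in>V" and BV: "B\<in>V" and cV: "c\<in>V" and W: "walk_betw F A W B" and Wl: "wlen w W = g A B"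
    and Wd: "distinct W" and geo: "g A c + g c B = g A B"
  shows "\<exists>i<length W. W!i = c \<and> wlen w (take (Suc i) W) = g A c"
proof -
  obtain W1 where W1: "walk_betw F A W1 c" "wlen w W1 = g A c" using g_short AV cV by blast
  obtain W2 where W2: "walk_betw F c W2 B" "wlen w W2 = g c B" using g_short cV BV by blast
  have J: "walk_betw F A (W1 @ tl W2) B \<and> wlen w (W1 @ tl W2) = wlen w W1 + wlen w W2"
    by (rule walk_join[OF W1(1) W2(1)])
  have "wlen w (W1 @ tl W2) = g A B" using J W1 W2 geo by simp
  then have d3: "distinct (W1 @ tl W2)" using shortest_distinct[of A "W1 @ tl W2" B] J by blast
  have eq: "W1 @ tl W2 = W"
  proof (rule unique_walk)
    show "walk F (W1 @ tl W2)" "hd (W1 @ tl W2) = hd W" "last (W1 @ tl W2) = last W"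
      using J W unfolding walk_betw_def by auto
    show "walk F W" using W unfolding walk_betw_def by blast
    show "distinct (W1 @ tl W2)" by (rule d3)
    show "distinct W" by (rule Wd)
  qed
  have ne: "W1 \<noteq> []" using W1 unfolding walk_betw_def walk_def by blast
  define i where "i = length W1 - 1"
  have il: "i < length W1" "Suc i = length W1" using ne unfolding i_def by auto
  have "W ! i = W1 ! i" unfolding eq[symmetric] using il by (simp add: nth_append)
  also have "\<dots> = last W1" using ne unfolding i_def by (simp add: last_conv_nth)
  also have "\<dots> = c" using W1 unfolding walk_betw_def by blast
  finally have Wi: "W ! i = c" .
  have "take (Suc i) W = W1" unfolding eq[symmetric] il(2) by simp
  moreover have "i < length W" unfolding eq[symmetric] using il by simp
  ultimately show ?thesis using Wi W1 by auto
qed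

lemma TL:
  assumes "A\<in>V" "B\<in>V" "c\<in>V" "u\<in>V" "g A c + g c B = g A B" "g A u + g u B = g A B" "g A c \<le> g A u"
  shows "g c u + g A c \<le> g A u"
proof -
  obtain W where W: "walk_betw F A W B" "wlen w W = g A B" using g_short assms by blast
  have Wd: "distinct W" using shortest_distinct W by blast
  obtain ic where ic: "ic < length W" "W!ic = c" "wlen w (take (Suc ic) W) = g A c"
    using walkpos[OF assms(1,2,3) W Wd assms(5)] by blast
  obtain iu where iu: "iu < length W" "W!iu = u" "wlen w (take (Suc iu) W) = g A u"
    using walkpos[OF assms(1,2,4) W Wd assms(6)] by blast
  have wW: "walk F W" using W unfolding walk_betw_def by blast
  have "ic \<le> iu"
  proof (rule ccontr)
    assume "\<not> ic \<le> iu"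
    then have "wlen w (take (Suc iu) W) < wlen w (take (Suc ic) W)"
      using pl_strict[OF wW _ ic(1)] wpos by simp
    then show False using ic iu assms(7) by simp
  qed
  then have "g (W!ic) (W!iu) + wlen w (take (Suc ic) W) \<le> wlen w (take (Suc iu) W)"
    using pl_g[OF wW _ iu(1)] by blast
  then show ?thesis using ic iu by simp
qed

lemma EDGE:
  assumes e: "{c,c'} \<in> F" and uV: "u \<in> V" and geo: "g c u + g u c' = g c c'"
  shows "u = c \<or> u = c'"
proof -
  have cV: "c \<in> V" "c' \<in> V" using edge_V e by auto
  have ne: "c \<noteq> c'" using edge_ne e .
  obtain W0 where W0: "walk_betw F c W0 c'" "wlen w W0 = g c c'" using g_short cV by blast
  have d0: "distinct W0" using shortest_distinct W0 by blast
  have "W0 = [c,c']"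
    by (rule unique_walk) (use W0 d0 e ne in \<open>auto simp: walk_betw_def\<close>)
  moreover obtain i where "i < length W0" "W0 ! i = u"
    using walkpos[OF cV(1,2) uV W0 d0 geo] by blast
  ultimately show ?thesis by (auto simp: less_2_cases_iff nth_Cons')
qed

end


lemma tends_fin: "finite (tends p)" "tends p \<noteq> {}"
  by (cases p; simp add: tends_def)+

lemma tdist_vr: "tdist F w p (vtx B) = Min ((\<lambda>a. toff w p a + real (gdist F w a B)) ` tends p)"
proof -
  obtain x y t where p: "p = (x,y,t)" by (cases p)
  have s1: "{toff w p a + real (gdist F w a b) + toff w (vtx B) b |a b. a \<in> tends p \<and> b \<in> tends (vtx B)}
     = (\<lambda>a. toff w p a + real (gdist F w a B)) ` tends p"
    by (auto simp: vtx_def tends_def toff_def)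
  have s2: "(case p of (x, y, t) \<Rightarrow> case vtx B of (x', y', t') \<Rightarrow>
         if x \<noteq> y \<and> x' = x \<and> y' = y then {\<bar>t - t'\<bar>}
         else if x \<noteq> y \<and> x' = y \<and> y' = x then {\<bar>t - (real (w {x, y}) - t')\<bar>}
         else {}) = {}"
    unfolding p vtx_def by auto
  show ?thesis unfolding tdist_def s1 s2 by simp
qed

lemma tdist_vl: "tdist F w (vtx A) p = Min ((\<lambda>b. real (gdist F w A b) + toff w p b) ` tends p)"
proof -
  obtain x y t where p: "p = (x,y,t)" by (cases p)
  have s1: "{toff w (vtx A) a + real (gdist F w a b) + toff w p b |a b. a \<in> tends (vtx A) \<and> b \<in> tends p}
     = (\<lambda>b. real (gdist F w A b) + toff w p b) ` tends p"
    by (auto simp: vtx_def tends_def toff_def)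
  have s2: "(case vtx A of (x, y, t) \<Rightarrow> case p of (x', y', t') \<Rightarrow>
         if x \<noteq> y \<and> x' = x \<and> y' = y then {\<bar>t - t'\<bar>}
         else if x \<noteq> y \<and> x' = y \<and> y' = x then {\<bar>t - (real (w {x, y}) - t')\<bar>}
         else {}) = {}"
    unfolding p vtx_def by auto
  show ?thesis unfolding tdist_def s1 s2 by simp
qed

lemma tdist_sym_vtx: "tdist F w (vtx A) p = tdist F w p (vtx A)"
  unfolding tdist_vl tdist_vr by (simp add: gdist_sym add.commute)

lemma tdist_vr_le: "a \<in> tends p \<Longrightarrow> tdist F w p (vtx B) \<le> toff w p a + real (gdist F w a B)"
  unfolding tdist_vr by (rule Min_le) (simp_all add: tends_fin)

lemma tdist_vr_ex: "\<exists>a\<in>tends p. tdist F w p (vtx B) = toff w p a + real (gdist F w a B)"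
proof -
  have "tdist F w p (vtx B) \<in> (\<lambda>a. toff w p a + real (gdist F w a B)) ` tends p"
    unfolding tdist_vr by (rule Min_in) (simp_all add: tends_fin)
  then show ?thesis by blast
qed

lemma tdist_vl_ex: "\<exists>b\<in>tends p. tdist F w (vtx A) p = real (gdist F w A b) + toff w p b"
proof -
  have "tdist F w (vtx A) p \<in> (\<lambda>b. real (gdist F w A b) + toff w p b) ` tends p"
    unfolding tdist_vl by (rule Min_in) (simp_all add: tends_fin)
  then show ?thesis by blast
qed

lemma tdist_vl_le: "b \<in> tends p \<Longrightarrow> tdist F w (vtx A) p \<le> real (gdist F w A b) + toff w p b"
  unfolding tdist_vl by (rule Min_le) (simp_all add: tends_fin)

context wtree begin

lemma valid_facts:
  assumes "valid_tpt V F w p"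
  shows "tends p \<subseteq> V" "\<And>a. a \<in> tends p \<Longrightarrow> 0 \<le> toff w p a"
    "\<And>a b. a \<in> tends p \<Longrightarrow> b \<in> tends p \<Longrightarrow> a \<noteq> b \<Longrightarrow> {a,b} \<in> F \<and> toff w p a + toff w p b = real (w {a,b})"
proof -
  obtain x y t where p: "p = (x,y,t)" by (cases p)
  show "tends p \<subseteq> V"
  proof (cases "x = y")
    case True then show ?thesis using assms p by (simp add: valid_tpt_def tends_def)
  next
    case False
    then have "{x,y} \<in> F" using assms p by (simp add: valid_tpt_def)
    then show ?thesis using edge_V p by (simp add: tends_def)
  qed
  show "0 \<le> toff w p a" if "a \<in> tends p" for a
  proof (cases "x = y")
    case True then show ?thesis using assms p that by (simp add: valid_tpt_def tends_def toff_def)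
  next
    case False then show ?thesis using assms p that by (auto simp add: valid_tpt_def tends_def toff_def)
  qed
  show "{a,b} \<in> F \<and> toff w p a + toff w p b = real (w {a,b})"
    if "a \<in> tends p" "b \<in> tends p" "a \<noteq> b" for a b
  proof -
    have xy: "x \<noteq> y" using that p by (auto simp: tends_def)
    then have v: "{x,y} \<in> F" "0 \<le> t" "t \<le> real (w {x,y})" using assms p by (auto simp: valid_tpt_def)
    have "(a = x \<and> b = y) \<or> (a = y \<and> b = x)" using that p by (auto simp: tends_def)
    then show ?thesis
    proof
      assume "a = x \<and> b = y" then show ?thesis using v xy p by (simp add: toff_def)
    next
      assume "a = y \<and> b = x" then show ?thesis using v xy p by (simp add: toff_def insert_commute)
    qed
  qed
qed

lemma vtx_eq:
  assumes vp: "valid_tpt V F w p" and uV: "u \<in> V" and z: "tdist F w p (vtx u) = 0" and AV: "A \<in> V"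
  shows "tdist F w (vtx A) p = real (g A u)"
proof -
  obtain a where a: "a \<in> tends p" "tdist F w p (vtx u) = toff w p a + real (g a u)"
    using tdist_vr_ex[where F=F and w=w] by blast
  have aV: "a \<in> V" using valid_facts(1)[OF vp] a by blast
  have "0 \<le> toff w p a" using valid_facts(2)[OF vp a(1)] .
  then have t0: "toff w p a = 0" and "g a u = 0" using a z by linarith+
  then have au: "a = u" using g_zero aV uV by blast
  have le: "tdist F w (vtx A) p \<le> real (g A u)"
    using tdist_vl_le[OF a(1), of F w A] t0 au by simp
  obtain b where b: "b \<in> tends p" "tdist F w (vtx A) p = real (g A b) + toff w p b"
    using tdist_vl_ex[where F=F and w=w] by blast
  have bV: "b \<in> V" using valid_facts(1)[OF vp] b by blast
  have "real (g A u) \<le> real (g A b) + toff w p b"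
  proof (cases "b = a")
    case True then show ?thesis using t0 au by simp
  next
    case False
    have f: "{b,a} \<in> F \<and> toff w p b + toff w p a = real (w {b,a})"
      using valid_facts(3)[OF vp b(1) a(1) False] .
    have "g b a \<le> w {b,a}" using g_edge f by blast
    moreover have "g A u \<le> g A b + g b a" using g_tri AV bV aV au by blast
    ultimately show ?thesis using f t0 by linarith
  qed
  then show ?thesis using le b by linarith
qed

lemma TRI1:
  assumes vp: "valid_tpt V F w p" and aV: "a \<in> V" and cV: "c \<in> V"
  shows "tdist F w p (vtx c) \<le> tdist F w p (vtx a) + real (g a c)"
proof -
  obtain a0 where a0: "a0 \<in> tends p" "tdist F w p (vtx a) = toff w p a0 + real (g a0 a)"
    using tdist_vr_ex[where F=F and w=w] by blast
  have a0V: "a0 \<in> V" using valid_facts(1)[OF vp] a0 by blast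
  have "g a0 c \<le> g a0 a + g a c" using g_tri a0V aV cV by blast
  then show ?thesis using tdist_vr_le[OF a0(1), of F w c] a0(2) by linarith
qed

lemma SEG:
  assumes vp: "valid_tpt V F w p" and AV: "A \<in> V" and BV: "B \<in> V" and uV: "u \<in> V"
    and s1: "tdist F w (vtx A) p + tdist F w p (vtx B) = real (g A B)"
    and s2: "g A u + g u B = g A B"
    and s3: "tdist F w (vtx A) p \<le> real (g A u)"
  shows "tdist F w p (vtx u) \<le> real (g A u) - tdist F w (vtx A) p"
proof -
  obtain c where c: "c \<in> tends p" "tdist F w (vtx A) p = real (g A c) + toff w p c"
    using tdist_vl_ex[where F=F and w=w] by blast
  obtain c' where c': "c' \<in> tends p" "tdist F w p (vtx B) = toff w p c' + real (g c' B)"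
    using tdist_vr_ex[where F=F and w=w] by blast
  have cV: "c \<in> V" "c' \<in> V" using valid_facts(1)[OF vp] c c' by blast+
  have o1: "0 \<le> toff w p c" "0 \<le> toff w p c'" using valid_facts(2)[OF vp] c c' by blast+
  show ?thesis
  proof (cases "c = c'")
    case True
    have "g A B \<le> g A c + g c B" using g_tri AV BV cV by blast
    then have gr: "real (g A B) \<le> real (g A c) + real (g c B)" by (simp only: of_nat_add[symmetric] of_nat_le_iff)
    have c'': "tdist F w p (vtx B) = toff w p c + real (g c B)" using c' True by simp
    have t0: "toff w p c = 0" using gr s1 c c'' o1 by linarith
    have "real (g A c) + real (g c B) = real (g A B)" using gr s1 c c'' o1 by linarith
    then have geo: "g A c + g c B = g A B" by (simp only: of_nat_add[symmetric] of_nat_eq_iff)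
    have "g A c \<le> g A u" using s3 c t0 by simp
    then have tl: "g c u + g A c \<le> g A u" using TL AV BV cV uV geo s2 by blast
    have "tdist F w p (vtx u) \<le> toff w p c + real (g c u)" using tdist_vr_le[OF c(1)] .
    then show ?thesis using tl t0 c by linarith
  next
    case False
    have f: "{c,c'} \<in> F \<and> toff w p c + toff w p c' = real (w {c,c'})"
      using valid_facts(3)[OF vp c(1) c'(1) False] .
    have e1: "g c c' \<le> w {c,c'}" using g_edge f by blast
    have e1': "g c' c \<le> w {c,c'}" using g_edge[of c' c] f by (simp add: insert_commute)
    have t1: "g A c' \<le> g A c + g c c'" using g_tri AV cV by blast
    have t2: "g c B \<le> g c c' + g c' B" using g_tri BV cV by blast
    have t3: "g A B \<le> g A c' + g c' B" using g_tri AV BV cV by blast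
    have t4: "g A B \<le> g A c + g c B" using g_tri AV BV cV by blast
    have sum: "g A c + w {c,c'} + g c' B = g A B" using s1 c c' f by linarith
    have h1: "g A c' = g A c + w {c,c'}" using sum t1 t3 e1 by linarith
    have h2: "g A c' + g c' B = g A B" using sum h1 by linarith
    have h3: "g A c + g c B = g A B" using sum t2 t4 e1 by linarith
    show ?thesis
    proof (cases "g A c' \<le> g A u")
      case True
      have tl: "g c' u + g A c' \<le> g A u" using TL AV BV cV uV h2 s2 True by blast
      have "tdist F w p (vtx u) \<le> toff w p c' + real (g c' u)" using tdist_vr_le[OF c'(1)] .
      then show ?thesis using tl h1 f c by linarith
    next
      case False
      have le1: "g A c \<le> g A u" using s3 c o1 by linarith
      have tl1: "g c u + g A c \<le> g A u" using TL AV BV cV uV h3 s2 le1 by blast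
      have tl2: "g u c' + g A u \<le> g A c'" using TL[OF AV BV uV cV(2) s2 h2] False by linarith
      have t5: "g c c' \<le> g c u + g u c'" using g_tri cV uV by blast
      have geo: "g c u + g u c' = g c c'" using tl1 tl2 t5 t1 h1 by linarith
      have "u = c \<or> u = c'" using EDGE f uV geo by blast
      then have uc: "u = c" using False h1 by auto
      then have s3': "tdist F w (vtx A) p \<le> real (g A c)" using s3 by simp
      then have t0: "toff w p c = 0" using c o1 by linarith
      have "tdist F w p (vtx u) \<le> toff w p c + real (g c u)" using tdist_vr_le[OF c(1)] .
      then show ?thesis using uc t0 c g_refl by simp
    qed
  qed
qed

end


context wtree begin

lemma claimC:
  fixes vs :: "'v list" and n L :: nat and sp :: "nat \<Rightarrow> nat" and P :: "nat \<Rightarrow> 'v tpt"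
  assumes n2: "2 \<le> n" and vsV: "\<And>i. i < n \<Longrightarrow> vs ! i \<in> V"
  and sp: "\<And>j. sp j = (\<Sum>j''\<in>{1..<j}. g (vs!(j''-1)) (vs!j''))"
  and L: "L = sp n"
  and valid: "\<And>x. x \<le> L \<Longrightarrow> valid_tpt V F w (P x)"
  and path: "\<And>j' x. 1 \<le> j' \<Longrightarrow> j' < n \<Longrightarrow> sp j' \<le> x \<Longrightarrow> x \<le> sp (Suc j') \<Longrightarrow>
     tdist F w (vtx (vs!(j'-1))) (P x) = real x - real (sp j') \<and>
     tdist F w (P x) (vtx (vs!j')) = real (sp (Suc j')) - real x"
  and xL: "x \<le> L" and yL: "y \<le> L" and uV: "u \<in> V" and u0: "tdist F w (P y) (vtx u) = 0"
  shows "tdist F w (P x) (vtx u) \<le> \<bar>real x - real y\<bar>"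
proof -
  have spS: "sp (Suc j) = sp j + g (vs!(j-1)) (vs!j)" if "1 \<le> j" for j
    using that unfolding sp by (simp add: sum.atLeastLessThan_Suc)
  have sp1: "sp 1 = 0" unfolding sp by simp
  have segex: "\<exists>j. 1 \<le> j \<and> j < n \<and> sp j \<le> z \<and> z \<le> sp (Suc j)" if zL: "z \<le> L" for z
  proof -
    have key: "1 \<le> k \<longrightarrow> k < n \<longrightarrow> z \<le> sp (Suc k) \<longrightarrow> (\<exists>j. 1 \<le> j \<and> j \<le> k \<and> sp j \<le> z \<and> z \<le> sp (Suc j))" for k
    proof (induction k)
      case 0 then show ?case by simp
    next
      case (Suc k)
      show ?case
      proof (intro impI)
        assume a: "1 \<le> Suc k" "Suc k < n" "z \<le> sp (Suc (Suc k))"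
        show "\<exists>j. 1 \<le> j \<and> j \<le> Suc k \<and> sp j \<le> z \<and> z \<le> sp (Suc j)"
        proof (cases "k = 0")
          case True
          then have "1 \<le> (1::nat) \<and> 1 \<le> Suc k \<and> sp 1 \<le> z \<and> z \<le> sp (Suc 1)" using a sp1 by simp
          then show ?thesis by blast
        next
          case k0: False
          show ?thesis
          proof (cases "z \<le> sp (Suc k)")
            case True
            then obtain j where "1 \<le> j \<and> j \<le> k \<and> sp j \<le> z \<and> z \<le> sp (Suc j)"
              using Suc.IH k0 a by auto
            then show ?thesis by (intro exI[of _ j]) simp
          next
            case False
            then have "1 \<le> Suc k \<and> Suc k \<le> Suc k \<and> sp (Suc k) \<le> z \<and> z \<le> sp (Suc (Suc k))" using a by simp
            then show ?thesis by blast
          qed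
        qed
      qed
    qed
    have "z \<le> sp (Suc (n - 1))" using zL L n2 by simp
    then obtain j where "1 \<le> j \<and> j \<le> n - 1 \<and> sp j \<le> z \<and> z \<le> sp (Suc j)"
      using key[of "n - 1"] n2 by auto
    then show ?thesis using n2 by (intro exI[of _ j]) auto
  qed
  have chain: "g (vs!i) (vs!i') + sp (Suc i) \<le> sp (Suc i')" if "i \<le> i'" "i' < n" for i i'
    using that
  proof (induction i')
    case 0 then show ?case using g_refl by simp
  next
    case (Suc k)
    show ?case
    proof (cases "i = Suc k")
      case True then show ?thesis using g_refl by simp
    next
      case False
      then have ik: "i \<le> k" using Suc.prems by simp
      have IH: "g (vs!i) (vs!k) + sp (Suc i) \<le> sp (Suc k)" using Suc.IH ik Suc.prems by simp
      have tri: "g (vs!i) (vs!Suc k) \<le> g (vs!i) (vs!k) + g (vs!k) (vs!Suc k)"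
        using g_tri vsV Suc.prems ik by simp
      have "sp (Suc (Suc k)) = sp (Suc k) + g (vs!k) (vs!Suc k)" using spS[of "Suc k"] by simp
      then show ?thesis using IH tri by linarith
    qed
  qed
  obtain j2 where j2: "1 \<le> j2" "j2 < n" "sp j2 \<le> y" "y \<le> sp (Suc j2)" using segex yL by blast
  obtain j1 where j1: "1 \<le> j1" "j1 < n" "sp j1 \<le> x" "x \<le> sp (Suc j1)" using segex xL by blast
  define A2 where "A2 = vs!(j2-1)"
  define B2 where "B2 = vs!j2"
  define A1 where "A1 = vs!(j1-1)"
  define B1 where "B1 = vs!j1"
  have VV: "A2 \<in> V" "B2 \<in> V" "A1 \<in> V" "B1 \<in> V"
    unfolding A2_def B2_def A1_def B1_def using vsV j1 j2 by auto
  have vy: "valid_tpt V F w (P y)" using valid yL .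
  have vx: "valid_tpt V F w (P x)" using valid xL .
  have py: "tdist F w (vtx A2) (P y) = real y - real (sp j2)" "tdist F w (P y) (vtx B2) = real (sp (Suc j2)) - real y"
    using path[OF j2] unfolding A2_def B2_def by auto
  have px: "tdist F w (vtx A1) (P x) = real x - real (sp j1)" "tdist F w (P x) (vtx B1) = real (sp (Suc j1)) - real x"
    using path[OF j1] unfolding A1_def B1_def by auto
  have gA2u: "real (g A2 u) = real y - real (sp j2)" using vtx_eq[OF vy uV u0 VV(1)] py(1) by simp
  have guB2: "real (g u B2) = real (sp (Suc j2)) - real y"
    using vtx_eq[OF vy uV u0 VV(2)] py(2) tdist_sym_vtx[of F w B2 "P y"] gdist_sym[of F w u B2] by simp
  consider (eq) "j1 = j2" | (lt) "j1 < j2" | (gt) "j2 < j1" by linarith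
  then show ?thesis
  proof cases
    case lt
    have c: "g B1 A2 + sp (Suc j1) \<le> sp j2"
      using chain[of j1 "j2 - 1"] lt j2 unfolding B1_def A2_def by simp
    have c': "real (g B1 A2) + real (sp (Suc j1)) \<le> real (sp j2)" using c
      by (metis of_nat_add of_nat_le_iff)
    have t1: "tdist F w (P x) (vtx u) \<le> tdist F w (P x) (vtx B1) + real (g B1 u)" using TRI1[OF vx VV(4) uV] .
    have t2: "g B1 u \<le> g B1 A2 + g A2 u" using g_tri VV uV by blast
    have t2': "real (g B1 u) \<le> real (g B1 A2) + real (g A2 u)" using t2
      by (metis of_nat_add of_nat_le_iff)
    show ?thesis using t1 t2' c' gA2u px(2) by linarith
  next
    case gt
    have c: "g B2 A1 + sp (Suc j2) \<le> sp j1"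
      using chain[of j2 "j1 - 1"] gt j1 unfolding B2_def A1_def by simp
    have c': "real (g B2 A1) + real (sp (Suc j2)) \<le> real (sp j1)" using c
      by (metis of_nat_add of_nat_le_iff)
    have t1: "tdist F w (P x) (vtx u) \<le> tdist F w (P x) (vtx A1) + real (g A1 u)" using TRI1[OF vx VV(3) uV] .
    have t1': "tdist F w (P x) (vtx A1) = real x - real (sp j1)" using px(1) tdist_sym_vtx[of F w A1 "P x"] by simp
    have t2: "g A1 u \<le> g A1 B2 + g B2 u" using g_tri VV uV by blast
    have t2': "real (g A1 u) \<le> real (g B2 A1) + real (g u B2)" using t2 gdist_sym[of F w A1 B2] gdist_sym[of F w B2 u]
      by (metis of_nat_add of_nat_le_iff)
    show ?thesis using t1 t1' t2' c' guB2 by linarith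
  next
    case eq
    have G: "sp (Suc j1) = sp j1 + g A1 B1" using spS[OF j1(1)] unfolding A1_def B1_def .
    have GR: "real (sp (Suc j1)) = real (sp j1) + real (g A1 B1)" using G by simp
    have gA1u: "real (g A1 u) = real y - real (sp j1)" using gA2u eq unfolding A1_def A2_def by simp
    have guB1: "real (g u B1) = real (sp (Suc j1)) - real y" using guB2 eq unfolding B1_def B2_def by simp
    show ?thesis
    proof (cases "x \<le> y")
      case True
      have s1: "tdist F w (vtx A1) (P x) + tdist F w (P x) (vtx B1) = real (g A1 B1)" using px GR by simp
      have "real (g A1 u + g u B1) = real (g A1 B1)" using gA1u guB1 GR by simp
      then have s2: "g A1 u + g u B1 = g A1 B1" by (simp only: of_nat_eq_iff)
      have s3: "tdist F w (vtx A1) (P x) \<le> real (g A1 u)" using px gA1u True by simp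
      have "tdist F w (P x) (vtx u) \<le> real (g A1 u) - tdist F w (vtx A1) (P x)"
        using SEG[OF vx VV(3) VV(4) uV s1 s2 s3] .
      then show ?thesis using px gA1u True by simp
    next
      case False
      have q1: "tdist F w (vtx B1) (P x) = real (sp (Suc j1)) - real x" using px(2) tdist_sym_vtx[of F w B1 "P x"] by simp
      have q2: "tdist F w (P x) (vtx A1) = real x - real (sp j1)" using px(1) tdist_sym_vtx[of F w A1 "P x"] by simp
      have s1: "tdist F w (vtx B1) (P x) + tdist F w (P x) (vtx A1) = real (g B1 A1)"
        using q1 q2 GR gdist_sym[of F w B1 A1] by simp
      have gB1u: "real (g B1 u) = real (sp (Suc j1)) - real y" using guB1 gdist_sym[of F w B1 u] by simp
      have guA1: "real (g u A1) = real y - real (sp j1)" using gA1u gdist_sym[of F w A1 u] by simp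
      have "real (g B1 u + g u A1) = real (g B1 A1)" using gB1u guA1 GR gdist_sym[of F w B1 A1] by simp
      then have s2: "g B1 u + g u A1 = g B1 A1" by (simp only: of_nat_eq_iff)
      have s3: "tdist F w (vtx B1) (P x) \<le> real (g B1 u)" using q1 gB1u False by simp
      have "tdist F w (P x) (vtx u) \<le> real (g B1 u) - tdist F w (vtx B1) (P x)"
        using SEG[OF vx VV(4) VV(3) uV s1 s2 s3] .
      then show ?thesis using q1 gB1u False by simp
    qed
  qed
qed

end


lemma greedy_sub: "foldl (greedy_step t w) H0 es \<subseteq> H0 \<union> set es"
proof (induction es arbitrary: H0)
  case Nil then show ?case by simp
next
  case (Cons e es)
  have "greedy_step t w H0 e \<subseteq> H0 \<union> {e}" by (auto simp add: greedy_step_def)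
  then show ?case using Cons.IH[of "greedy_step t w H0 e"] by auto
qed

theorem proposition1:
  fixes V :: "'v set" and E :: "'v set set" and w :: "'v set \<Rightarrow> nat"
    and Z H :: "'v set set" and es :: "'v set list" and vs :: "'v list"
    and k i :: nat and \<epsilon> t a :: real and L s m :: nat
    and P :: "nat \<Rightarrow> 'v tpt" and r :: "nat \<Rightarrow> nat"
    and u v :: 'v and h j yu yv b :: nat and M :: "(nat \<times> nat) set" and g g' :: nat
  assumes G: "graph V E" and conn: "connected_on V E"
    and wpos: "\<forall>e\<in>E. 0 < w e"
    and mst: "unique_mst V E w Z"
    and k2: "2 \<le> k" and eps: "0 < \<epsilon>"
    and t_def: "t = (2 * real k - 1) * (1 + \<epsilon>)"
    and es_sorted: "distinct es" "set es = E" "sorted (map w es)"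
    and H_def: "H = greedy_spanner t w es"
    and pre: "preorder_traversal V Z w vs"
    and L_def: "L = (\<Sum>j'\<in>{1..<card V}. gdist Z w (vs ! (j' - 1)) (vs ! j'))"
    and i_range: "1 \<le> i" "real i \<le> real_of_int \<lceil>log (real k) (real (card V))\<rceil>"
    and a_def: "a = real k ^ (i - 1) * real L / real (card V)"
    and P_valid: "\<forall>x\<le>L. valid_tpt V Z w (P x)"
    and P_path: "\<forall>j'\<in>{1..<card V}. \<forall>x.
        (\<Sum>j''\<in>{1..<j'}. gdist Z w (vs ! (j'' - 1)) (vs ! j'')) \<le> x \<and>
        x \<le> (\<Sum>j''\<in>{1..j'}. gdist Z w (vs ! (j'' - 1)) (vs ! j'')) \<longrightarrow>
          tdist Z w (vtx (vs ! (j' - 1))) (P x)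
            = real x - real (\<Sum>j''\<in>{1..<j'}. gdist Z w (vs ! (j'' - 1)) (vs ! j'')) \<and>
          tdist Z w (P x) (vtx (vs ! j'))
            = real (\<Sum>j''\<in>{1..j'}. gdist Z w (vs ! (j'' - 1)) (vs ! j'')) - real x"
    and s_def: "real s = 8 * real L / (\<epsilon> * a)"
    and m_def: "real m = \<epsilon> * a / 8"
    and r_int: "\<forall>j'\<in>{1..s}. (j' - 1) * m < r j' \<and> r j' < j' * m"
    and uv_Ei: "{u, v} \<in> H" "{u, v} \<notin> Z" "a < real (w {u, v})" "real (w {u, v}) \<le> real k * a"
    and h_j: "h \<in> {1..s}" "j \<in> {1..s}"
    and u_in: "(h - 1) * m \<le> yu" "yu \<le> h * m" "tdist Z w (P yu) (vtx u) = 0"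
    and v_in: "(j - 1) * m \<le> yv" "yv \<le> j * m" "tdist Z w (P yv) (vtx v) = 0"
    and b_def: "b = nat \<lfloor>real (w {u, v}) / a\<rfloor>"
    and M_sub: "M \<subseteq> {g1\<in>{1..s}. \<bar>int h - int g1\<bar> \<le> int b} \<times> {g1\<in>{1..s}. \<bar>int j - int g1\<bar> \<le> int b}"
    and M_matching: "\<forall>(g1, g1')\<in>M. \<forall>(g2, g2')\<in>M. g1 = g2 \<longleftrightarrow> g1' = g2'"
    and M_maximal: "\<forall>g1\<in>{g1\<in>{1..s}. \<bar>int h - int g1\<bar> \<le> int b}.
                     \<forall>g1'\<in>{g1\<in>{1..s}. \<bar>int j - int g1\<bar> \<le> int b}.
                     \<exists>(g2, g2')\<in>M. g2 = g1 \<or> g2' = g1'"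
    and qq': "(g, g') \<in> M"
  shows "tdist Z w (P (r g)) (vtx u) + real (w {u, v}) + tdist Z w (vtx v) (P (r g'))
           \<le> (1 + \<epsilon> / 2) * real (w {u, v})"
proof -
  have Zspan: "spanning_tree V E Z" using mst unfolding unique_mst_def by blast
  then have ZE: "Z \<subseteq> E" and Zconn: "connected_on V Z" and Zacyc: "acyclic_edges Z"
    unfolding spanning_tree_def by auto
  have Eedges: "\<And>e. e \<in> E \<Longrightarrow> e \<subseteq> V \<and> card e = 2" using G unfolding graph_def by blast
  interpret T: wtree V Z w
  proof
    show "\<And>e. e \<in> Z \<Longrightarrow> e \<subseteq> V \<and> card e = 2" using ZE Eedges by blast
    show "\<And>e. e \<in> Z \<Longrightarrow> 0 < w e" using ZE wpos by blast
    show "connected_on V Z" by (rule Zconn)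
    show "acyclic_edges Z" by (rule Zacyc)
  qed
  have HE: "H \<subseteq> E" using greedy_sub[of t w "{}" es] es_sorted(2) unfolding H_def greedy_spanner_def by simp
  have uvE: "{u,v} \<in> E" using HE uv_Ei(1) by blast
  have uV: "u \<in> V" and vV: "v \<in> V" using Eedges[OF uvE] by auto
  define n where "n = card V"
  have lenvs: "length vs = n" using pre distinct_card unfolding preorder_traversal_def n_def by metis
  have vsV: "\<And>i. i < n \<Longrightarrow> vs!i \<in> V" using pre lenvs nth_mem unfolding preorder_traversal_def by metis
  define sp where "sp j = (\<Sum>j''\<in>{1..<j}. gdist Z w (vs!(j''-1)) (vs!j''))" for j
  have Lsp: "L = sp n" using L_def unfolding sp_def n_def by simp
  have spS': "sp (Suc j') = (\<Sum>j''\<in>{1..j'}. gdist Z w (vs ! (j'' - 1)) (vs ! j''))" for j'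
    unfolding sp_def atLeastLessThanSuc_atLeastAtMost ..
  have path': "tdist Z w (vtx (vs!(j'-1))) (P x) = real x - real (sp j') \<and>
     tdist Z w (P x) (vtx (vs!j')) = real (sp (Suc j')) - real x"
    if "1 \<le> j'" "j' < n" "sp j' \<le> x" "x \<le> sp (Suc j')" for j' x
  proof -
    have jin: "j' \<in> {1..<card V}" using that n_def by simp
    have e1: "(\<Sum>j''\<in>{1..<j'}. gdist Z w (vs ! (j'' - 1)) (vs ! j'')) = sp j'" by (rule sp_def[symmetric])
    have e2: "(\<Sum>j''\<in>{1..j'}. gdist Z w (vs ! (j'' - 1)) (vs ! j'')) = sp (Suc j')" by (rule spS'[symmetric])
    note pp = bspec[OF P_path jin]
    note pp2 = pp[unfolded e1 e2]
    show ?thesis using pp2 that by blast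
  qed
  have gs: "g \<in> {1..s}" "\<bar>int h - int g\<bar> \<le> int b" "g' \<in> {1..s}" "\<bar>int j - int g'\<bar> \<le> int b"
    using M_sub qq' by auto
  have rg: "(g - 1) * m < r g" "r g < g * m" using r_int gs(1) by auto
  have rg': "(g' - 1) * m < r g'" "r g' < g' * m" using r_int gs(3) by auto
  have m0: "0 < m" using rg(2) by (cases m) auto
  have a0: "0 < a"
  proof -
    have "0 < \<epsilon> * a / 8" using m0 m_def by (metis of_nat_0_less_iff)
    then have "0 < \<epsilon> * a" by simp
    then show ?thesis using eps by (simp add: zero_less_mult_iff)
  qed
  have "real s * real m = real L" unfolding s_def m_def using a0 eps by (simp add: field_simps)
  then have sm: "s * m = L" by (metis of_nat_eq_iff of_nat_mult)
  have n2: "2 \<le> n"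
  proof (rule ccontr)
    assume "\<not> 2 \<le> n"
    then have "{1..<n} = {}" by auto
    then have "L = 0" using Lsp unfolding sp_def by simp
    then have "s = 0" using sm m0 by simp
    then show False using gs(1) by simp
  qed
  have gsm: "g * m \<le> L" "g' * m \<le> L" "h * m \<le> L" "j * m \<le> L" using gs(1,3) h_j sm by auto
  have rgL: "r g \<le> L" "r g' \<le> L" using rg rg' gsm by linarith+
  have yL: "yu \<le> L" "yv \<le> L" using u_in v_in gsm by linarith+
  have valid: "\<And>x. x \<le> L \<Longrightarrow> valid_tpt V Z w (P x)" using P_valid by blast
  have CU: "tdist Z w (P (r g)) (vtx u) \<le> \<bar>real (r g) - real yu\<bar>"
    by (rule T.claimC[OF n2 vsV sp_def Lsp valid path' rgL(1) yL(1) uV u_in(3)]) auto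
  have CV: "tdist Z w (P (r g')) (vtx v) \<le> \<bar>real (r g') - real yv\<bar>"
    by (rule T.claimC[OF n2 vsV sp_def Lsp valid path' rgL(2) yL(2) vV v_in(3)]) auto
  have CV': "tdist Z w (vtx v) (P (r g')) \<le> \<bar>real (r g') - real yv\<bar>"
    using CV tdist_sym_vtx[of Z w v "P (r g')"] by simp
  define W where "W = real (w {u,v})"
  have bW: "real b \<le> W / a"
  proof -
    have "0 \<le> W / a" using a0 unfolding W_def by simp
    then have "real b = real_of_int \<lfloor>W / a\<rfloor>" unfolding b_def W_def by simp
    then show ?thesis by linarith
  qed
  have bm: "real b * real m \<le> \<epsilon> * W / 8"
  proof -
    have "real b * real m \<le> (W / a) * real m" by (rule mult_right_mono[OF bW]) simp
    also have "\<dots> = \<epsilon> * W / 8" unfolding m_def using a0 by (simp add: field_simps)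
    finally show ?thesis .
  qed
  have mW: "real m \<le> \<epsilon> * W / 8" unfolding m_def W_def using uv_Ei(3) eps by (simp add: field_simps)
  have hgb: "h \<le> g + b" "g \<le> h + b" "j \<le> g' + b" "g' \<le> j + b" using gs by linarith+
  have prod: "real x1 * real m \<le> real x2 * real m + real b * real m" if "x1 \<le> x2 + b" for x1 x2
  proof -
    have "real x1 \<le> real x2 + real b" using that by (metis of_nat_add of_nat_le_iff)
    then have "real x1 * real m \<le> (real x2 + real b) * real m" by (simp add: mult_right_mono)
    then show ?thesis by (simp add: algebra_simps)
  qed
  have p1: "real h * real m \<le> real g * real m + real b * real m" using prod hgb(1) by blast
  have p2: "real g * real m \<le> real h * real m + real b * real m" using prod hgb(2) by blast
  have p3: "real j * real m \<le> real g' * real m + real b * real m" using prod hgb(3) by blast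
  have p4: "real g' * real m \<le> real j * real m + real b * real m" using prod hgb(4) by blast
  have g1: "1 \<le> g" "1 \<le> g'" "1 \<le> h" "1 \<le> j" using gs(1,3) h_j by auto
  have cast: "real ((x - 1) * m) = real x * real m - real m" if "1 \<le> x" for x
    using that by (simp add: of_nat_diff algebra_simps)
  have r1: "real g * real m - real m < real (r g)" using rg(1) cast[OF g1(1)] by (metis of_nat_less_iff)
  have r2: "real (r g) < real g * real m" using rg(2) by (metis of_nat_less_iff of_nat_mult)
  have r3: "real g' * real m - real m < real (r g')" using rg'(1) cast[OF g1(2)] by (metis of_nat_less_iff)
  have r4: "real (r g') < real g' * real m" using rg'(2) by (metis of_nat_less_iff of_nat_mult)
  have y1: "real h * real m - real m \<le> real yu" using u_in(1) cast[OF g1(3)] by (metis of_nat_le_iff)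
  have y2: "real yu \<le> real h * real m" using u_in(2) by (metis of_nat_le_iff of_nat_mult)
  have y3: "real j * real m - real m \<le> real yv" using v_in(1) cast[OF g1(4)] by (metis of_nat_le_iff)
  have y4: "real yv \<le> real j * real m" using v_in(2) by (metis of_nat_le_iff of_nat_mult)
  have dU: "\<bar>real (r g) - real yu\<bar> \<le> real b * real m + real m" using r1 r2 y1 y2 p1 p2 by linarith
  have dV: "\<bar>real (r g') - real yv\<bar> \<le> real b * real m + real m" using r3 r4 y3 y4 p3 p4 by linarith
  have fin: "(1 + \<epsilon> / 2) * W = W + \<epsilon> * W / 2" by (simp add: algebra_simps)
  show ?thesis unfolding W_def[symmetric] using CU CV' dU dV bm mW fin by linarith
qed

end
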